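(* Let $\rho_0,\rho_1\in\mathcal{P}(\mathbb{R}^n)\cap L^\infty(\mathbb{R}^n)$ both be radially decreasing, and let $\{\rho_t\}_{t\in[0,1]}$ be the height-function interpolation curve between them. Then for $m\geq2$ the function $t\mapsto\mathcal{S}[\rho_t]=\frac{1}{m-1}\int_{\mathbb{R}^n}\rho_t^m\,dx$ is convex on $(0,1)$.
   Context: Radially decreasing = radially symmetric about the origin and nonincreasing in $|x|$. For a radially decreasing $\rho\in\mathcal{P}\cap L^\infty$, its height function $h:(0,1)\to(0,\|\rho\|_\infty)$ is defined by $\int_{\mathbb{R}^n}\min\{\rho(x),h(s)\}dx=s$. Interpolation curve: with $h_0,h_1$ the height functions of $\rho_0,\rho_1$, set $h_t=(1-t)h_0+th_1$ and $\rho_t(x)=\int_0^1\chi_{(c_nh_t'(s))^{-1/n}}(x)\,h_t'(s)\,ds$, where $c_n$ is the volume of the unit ball in $\mathbb{R}^n$ and $\chi_r=1_{B(0,r)}$. *)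

theory Defs
  imports "HOL-Analysis.Analysis" "HOL-Probability.Essential_Supremum"
begin

definition radially_decreasing :: "('a::euclidean_space \<Rightarrow> real) \<Rightarrow> bool" where
  "radially_decreasing \<rho> \<longleftrightarrow>
     (\<forall>x y. norm x = norm y \<longrightarrow> \<rho> x = \<rho> y) \<and>
     (\<forall>x y. norm x \<le> norm y \<longrightarrow> \<rho> y \<le> \<rho> x)"

definition prob_density_Linf :: "('a::euclidean_space \<Rightarrow> real) \<Rightarrow> bool" where
  "prob_density_Linf \<rho> \<longleftrightarrow>
     \<rho> \<in> borel_measurable lebesgue \<and> (\<forall>x. 0 \<le> \<rho> x) \<and>
     integrable lebesgue \<rho> \<and> (\<integral>x. \<rho> x \<partial>lebesgue) = 1 \<and>
     (\<exists>M. AE x in lebesgue. \<bar>\<rho> x\<bar> \<le> M)"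

definition Linf_norm :: "('a::euclidean_space \<Rightarrow> real) \<Rightarrow> ereal" where
  "Linf_norm \<rho> = esssup lebesgue (\<lambda>x. ereal \<bar>\<rho> x\<bar>)"

definition is_height_function :: "('a::euclidean_space \<Rightarrow> real) \<Rightarrow> (real \<Rightarrow> real) \<Rightarrow> bool" where
  "is_height_function \<rho> h \<longleftrightarrow>
     (\<forall>s\<in>{0<..<1}. 0 < h s \<and> ereal (h s) < Linf_norm \<rho> \<and>
        (\<integral>x. min (\<rho> x) (h s) \<partial>lebesgue) = s)"

definition unit_ball_volume :: "'a::euclidean_space itself \<Rightarrow> real" where
  "unit_ball_volume _ = measure lebesgue (ball (0::'a) 1)"

definition interp_curve :: "(real \<Rightarrow> real) \<Rightarrow> (real \<Rightarrow> real) \<Rightarrow> real \<Rightarrow> 'a::euclidean_space \<Rightarrow> real" where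
  "interp_curve h0 h1 t x =
     (let ht = (\<lambda>s. (1 - t) * h0 s + t * h1 s)
      in LINT s:{0<..<1}|lborel.
           indicator (ball (0::'a) ((unit_ball_volume TYPE('a) * deriv ht s) powr (- 1 / real DIM('a)))) x
           * deriv ht s)"

definition S_functional :: "real \<Rightarrow> ('a::euclidean_space \<Rightarrow> real) \<Rightarrow> real" where
  "S_functional m \<rho> = 1 / (m - 1) * (\<integral>x. (\<rho> x) powr m \<partial>lebesgue)"

end

theory Submission imports Defs begin

lemma min_concave_aux:
  fixes r a b u v :: real
  assumes "u \<ge> 0" "v \<ge> 0" "u + v = 1"
  shows "u * min r a + v * min r b \<le> min r (u * a + v * b)"
proof -
  have "u * min r a \<le> u * r" "v * min r b \<le> v * r" using assms by (auto intro: mult_left_mono)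
  moreover have "u * min r a \<le> u * a" "v * min r b \<le> v * b" using assms by (auto intro: mult_left_mono)
  moreover have "u * r + v * r = r" "u * a + v * b = u * a + v * b"
    using assms(3) by (simp_all add: distrib_right[symmetric])
  ultimately show ?thesis by (metis add_mono min.boundedI)
qed

locale hfun =
  fixes \<rho> :: "'a::euclidean_space \<Rightarrow> real" and h :: "real \<Rightarrow> real"
  assumes dens: "prob_density_Linf \<rho>" and hf: "is_height_function \<rho> h"
begin

definition F :: "real \<Rightarrow> real" where "F a = (\<integral>x. min (\<rho> x) a \<partial>lebesgue)"

lemma meas: "\<rho> \<in> borel_measurable lebesgue" using dens by (simp add: prob_density_Linf_def)
lemma nonneg: "0 \<le> \<rho> x" using dens by (simp add: prob_density_Linf_def)
lemma integ: "integrable lebesgue \<rho>" using dens by (simp add: prob_density_Linf_def)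
lemma int1: "(\<integral>x. \<rho> x \<partial>lebesgue) = 1" using dens by (simp add: prob_density_Linf_def)

lemma integ_min: "0 \<le> a \<Longrightarrow> integrable lebesgue (\<lambda>x. min (\<rho> x) a)"
  apply (rule Bochner_Integration.integrable_bound[OF integ])
  using meas nonneg by auto

lemma hpos: "s \<in> {0<..<1} \<Longrightarrow> 0 < h s" using hf by (simp add: is_height_function_def)
lemma Fh: "s \<in> {0<..<1} \<Longrightarrow> F (h s) = s" using hf by (simp add: is_height_function_def F_def)
lemma hlt: "s \<in> {0<..<1} \<Longrightarrow> ereal (h s) < Linf_norm \<rho>" using hf by (simp add: is_height_function_def)

lemma F_mono: "0 \<le> a \<Longrightarrow> a \<le> b \<Longrightarrow> F a \<le> F b"
  unfolding F_def by (intro integral_mono integ_min) auto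

lemma hmono: "s1 \<in> {0<..<1} \<Longrightarrow> s2 \<in> {0<..<1} \<Longrightarrow> s1 < s2 \<Longrightarrow> h s1 < h s2"
proof (rule ccontr)
  assume a: "s1 \<in> {0<..<1}" "s2 \<in> {0<..<1}" "s1 < s2" "\<not> h s1 < h s2"
  then have "F (h s2) \<le> F (h s1)" using hpos by (intro F_mono) (auto intro: less_imp_le)
  then show False using Fh a by simp
qed

lemma ess_meas: "(\<lambda>x. ereal \<bar>\<rho> x\<bar>) \<in> borel_measurable lebesgue"
  using meas by measurable

lemma hbound: "\<exists>K. \<forall>s\<in>{0<..<1}. h s \<le> K"
proof -
  obtain M where M: "AE x in lebesgue. \<bar>\<rho> x\<bar> \<le> M" using dens by (auto simp: prob_density_Linf_def)
  have "Linf_norm \<rho> \<le> ereal M" unfolding Linf_norm_def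
    by (rule esssup_I[OF ess_meas]) (use M in auto)
  then have "\<forall>s\<in>{0<..<1}. h s \<le> M" using hlt
    by (metis ereal_less_eq(3) less_imp_le order_less_le_trans)
  then show ?thesis by blast
qed

lemma pos_measure: "ereal y < Linf_norm \<rho> \<Longrightarrow> emeasure lebesgue {x. \<rho> x > y} > 0"
proof -
  assume "ereal y < Linf_norm \<rho>"
  then have "emeasure lebesgue {x \<in> space lebesgue. ereal \<bar>\<rho> x\<bar> > ereal y} > 0"
    unfolding Linf_norm_def by (intro esssup_pos_measure ess_meas)
  moreover have "{x \<in> space lebesgue. ereal \<bar>\<rho> x\<bar> > ereal y} = {x. \<rho> x > y}"
    using nonneg by auto
  ultimately show ?thesis by simp
qed

lemma F_strict:
  assumes "0 \<le> y" "y < z" "ereal y < Linf_norm \<rho>"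
  shows "F y < F z"
proof (rule ccontr)
  assume "\<not> F y < F z"
  then have "F z - F y \<le> 0" by simp
  have i: "integrable lebesgue (\<lambda>x. min (\<rho> x) z - min (\<rho> x) y)"
    using integ_min assms by auto
  have eq: "(\<integral>x. min (\<rho> x) z - min (\<rho> x) y \<partial>lebesgue) = F z - F y"
    unfolding F_def using integ_min assms by (subst Bochner_Integration.integral_diff) auto
  have "(\<integral>x. min (\<rho> x) z - min (\<rho> x) y \<partial>lebesgue) \<ge> 0"
    using assms by (intro integral_nonneg_AE) auto
  then have "(\<integral>x. min (\<rho> x) z - min (\<rho> x) y \<partial>lebesgue) = 0" using eq \<open>F z - F y \<le> 0\<close> by linarith
  then have "AE x in lebesgue. min (\<rho> x) z - min (\<rho> x) y = 0"
    using integral_nonneg_eq_0_iff_AE[OF i] assms by auto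
  then have "AE x in lebesgue. \<not> \<rho> x > y"
    by eventually_elim (use assms in auto)
  moreover have mset: "{x. y < \<rho> x} \<in> sets lebesgue"
  proof -
    have "{x \<in> space lebesgue. y < \<rho> x} \<in> sets lebesgue" using meas by measurable
    then show ?thesis by simp
  qed
  ultimately have "emeasure lebesgue {x. y < \<rho> x} = 0"
    using AE_iff_measurable[OF mset, of "\<lambda>x. \<not> y < \<rho> x"] by auto
  then show False using pos_measure[OF assms(3)] by auto
qed

lemma hconvex: "convex_on {0<..<1} h"
  unfolding convex_on_def
proof (intro conjI ballI allI impI)
  show "convex {0<..<1::real}" by simp
  fix s1 s2 u v :: real
  assume s: "s1 \<in> {0<..<1}" "s2 \<in> {0<..<1}" and uv: "0 \<le> u" "0 \<le> v" "u + v = 1"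
  define s where "s = u * s1 + v * s2"
  have sin: "s \<in> {0<..<1}"
  proof -
    define lo where "lo = min s1 s2"
    define hi where "hi = max s1 s2"
    have "u * lo \<le> u * s1" "v * lo \<le> v * s2" "u * s1 \<le> u * hi" "v * s2 \<le> v * hi"
      using uv unfolding lo_def hi_def by (auto intro!: mult_left_mono)
    moreover have "u * lo + v * lo = lo" "u * hi + v * hi = hi"
      using uv(3) by (simp_all add: distrib_right[symmetric])
    moreover have "0 < lo" "hi < 1" using s unfolding lo_def hi_def by auto
    ultimately show ?thesis unfolding s_def by auto
  qed
  define y where "y = u * h s1 + v * h s2"
  have y0: "0 \<le> y" unfolding y_def using hpos[OF s(1)] hpos[OF s(2)] uv by simp
  have "F y \<ge> u * F (h s1) + v * F (h s2)"
  proof -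
    have "u * F (h s1) + v * F (h s2) = (\<integral>x. u * min (\<rho> x) (h s1) + v * min (\<rho> x) (h s2) \<partial>lebesgue)"
      unfolding F_def using integ_min hpos s
      by (subst Bochner_Integration.integral_add) (auto intro!: integrable_mult_right less_imp_le)
    also have "\<dots> \<le> F y" unfolding F_def y_def
      using integ_min hpos s uv y0 unfolding y_def
      by (intro integral_mono min_concave_aux) (auto intro!: Bochner_Integration.integrable_add integrable_mult_right less_imp_le)
    finally show ?thesis .
  qed
  then have Fy: "F y \<ge> s" using Fh s unfolding s_def by simp
  show "h (u *\<^sub>R s1 + v *\<^sub>R s2) \<le> u * h s1 + v * h s2"
  proof (rule ccontr)
    assume "\<not> ?thesis"
    then have "y < h s" unfolding y_def s_def by simp
    moreover have "ereal y < Linf_norm \<rho>" using hlt[OF sin] \<open>y < h s\<close>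
      by (meson ereal_less_eq(3) le_less_trans less_imp_le)
    ultimately have "F y < F (h s)" using F_strict y0 by blast
    then show False using Fy Fh[OF sin] by simp
  qed
qed

lemma F_pos: "0 < e \<Longrightarrow> 0 < F e"
proof (rule ccontr)
  assume e: "0 < e" "\<not> 0 < F e"
  have i: "integrable lebesgue (\<lambda>x. min (\<rho> x) e)" using integ_min e by auto
  have "F e \<ge> 0" unfolding F_def using nonneg e by (intro integral_nonneg_AE) auto
  then have "F e = 0" using e by simp
  then have "AE x in lebesgue. min (\<rho> x) e = 0"
    using integral_nonneg_eq_0_iff_AE[OF i] nonneg e unfolding F_def by auto
  then have "AE x in lebesgue. \<rho> x = 0" by eventually_elim (use e in auto)
  then have "(\<integral>x. \<rho> x \<partial>lebesgue) = (\<integral>x. 0 \<partial>lebesgue)"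
    using integral_cong_AE[OF meas, of "\<lambda>x. 0"] by simp
  then show False using int1 by simp
qed

lemma hlim0: "(h \<longlongrightarrow> 0) (at_right 0)"
proof (rule tendstoI)
  fix e :: real assume e: "0 < e"
  define d where "d = min (F e) 1"
  have d: "0 < d" using F_pos e d_def by simp
  show "\<forall>\<^sub>F x in at_right 0. dist (h x) 0 < e"
    unfolding eventually_at_right[OF d]
  proof (intro exI[of _ d] conjI allI impI)
    show "0 < d" by (fact d)
    fix s assume "0 < s" "s < d"
    then have sin: "s \<in> {0<..<1}" unfolding d_def by simp
    have "h s < e"
    proof (rule ccontr)
      assume "\<not> h s < e"
      then have "F e \<le> F (h s)" using e by (intro F_mono) auto
      then show False using Fh[OF sin] \<open>s < d\<close> unfolding d_def by simp
    qed
    then show "dist (h s) 0 < e" using hpos[OF sin] by simp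
  qed
qed

end


lemma sandwich_FTC:
  fixes F R :: "real \<Rightarrow> real"
  assumes sw: "\<And>s u. 0 < s \<Longrightarrow> s \<le> u \<Longrightarrow> u < 1 \<Longrightarrow> R s * (u - s) \<le> F u - F s \<and> F u - F s \<le> R u * (u - s)"
    and ab: "0 < a" "a \<le> b" "b < 1"
  shows "(R has_integral (F b - F a)) {a..b}"
proof -
  have Rmono: "R s \<le> R u" if "0 < s" "s \<le> u" "u < 1" for s u
  proof (cases "s = u")
    case False
    then have "s < u" using that by simp
    from sw[OF that] have "R s * (u - s) \<le> R u * (u - s)" by linarith
    then show ?thesis using \<open>s < u\<close> by simp
  qed simp
  have mono: "mono_on {a..b} R" by (rule mono_onI) (use ab Rmono in auto)
  have int: "R integrable_on {a..b}" by (rule integrable_on_mono_on[OF mono])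
  have intsub: "R integrable_on {s..u}" if "a \<le> s" "u \<le> b" for s u
    using integrable_on_subinterval[OF int] that by auto
  define \<Phi> where "\<Phi> y = integral {a..y} R - (F y - F a)" for y
  have loc: "\<bar>\<Phi> u - \<Phi> s\<bar> \<le> (R u - R s) * (u - s)" if su: "a \<le> s" "s \<le> u" "u \<le> b" for s u
  proof -
    have "integral {a..s} R + integral {s..u} R = integral {a..u} R"
      using Henstock_Kurzweil_Integration.integral_combine[where f=R and a=a and c=s and b=u] su intsub[of a u] by auto
    then have eq: "\<Phi> u - \<Phi> s = integral {s..u} R - (F u - F s)" unfolding \<Phi>_def by simp
    have lo: "R s * (u - s) \<le> integral {s..u} R"
    proof -
      have "integral {s..u} (\<lambda>_. R s) \<le> integral {s..u} R"
        by (rule integral_le) (use su ab intsub Rmono in auto)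
      then show ?thesis using su by (simp add: mult.commute)
    qed
    have hi: "integral {s..u} R \<le> R u * (u - s)"
    proof -
      have "integral {s..u} R \<le> integral {s..u} (\<lambda>_. R u)"
        by (rule integral_le) (use su ab intsub Rmono in auto)
      then show ?thesis using su by (simp add: mult.commute)
    qed
    have "R s * (u - s) \<le> F u - F s" "F u - F s \<le> R u * (u - s)"
      using sw[of s u] su ab by auto
    then show ?thesis using eq lo hi by (simp add: abs_le_iff algebra_simps)
  qed
  have tele: "a + real k * d \<le> b \<longrightarrow> \<bar>\<Phi> (a + real k * d) - \<Phi> a\<bar> \<le> (R (a + real k * d) - R a) * d"
    if d: "0 \<le> d" for k d
  proof (induction k)
    case 0 then show ?case by simp
  next
    case (Suc k)
    show ?case
    proof
      assume le: "a + real (Suc k) * d \<le> b"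
      have le2: "a + real k * d \<le> b" using le d by (simp add: algebra_simps)
      have e: "a + real (Suc k) * d = (a + real k * d) + d" by (simp add: algebra_simps)
      have "\<bar>\<Phi> (a + real (Suc k) * d) - \<Phi> (a + real k * d)\<bar> \<le> (R (a + real (Suc k) * d) - R (a + real k * d)) * d"
        using loc[of "a + real k * d" "a + real (Suc k) * d"] le d e by simp
      moreover have "\<bar>\<Phi> (a + real k * d) - \<Phi> a\<bar> \<le> (R (a + real k * d) - R a) * d"
        using Suc le2 by simp
      ultimately show "\<bar>\<Phi> (a + real (Suc k) * d) - \<Phi> a\<bar> \<le> (R (a + real (Suc k) * d) - R a) * d"
        by (simp add: algebra_simps abs_le_iff) 
    qed
  qed
  have \<Phi>a: "\<Phi> a = 0" unfolding \<Phi>_def by simp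
  define C where "C = (R b - R a) * (b - a)"
  have bound: "\<bar>\<Phi> b\<bar> \<le> C / real K" if "K \<ge> 1" for K :: nat
  proof -
    define d where "d = (b - a) / real K"
    have d0: "0 \<le> d" using ab that unfolding d_def by simp
    have ab': "a + real K * d = b" using that unfolding d_def by simp
    from tele[OF d0, of K] ab' \<Phi>a show ?thesis unfolding C_def d_def by simp
  qed
  have "\<Phi> b = 0"
  proof (rule ccontr)
    assume ne: "\<Phi> b \<noteq> 0"
    then have pos: "\<bar>\<Phi> b\<bar> > 0" by simp
    obtain K :: nat where K: "C / \<bar>\<Phi> b\<bar> < real K" using reals_Archimedean2 by blast
    define K' where "K' = max K 1"
    have "C / \<bar>\<Phi> b\<bar> < real K'" using K unfolding K'_def by linarith
    then have "C < real K' * \<bar>\<Phi> b\<bar>" using pos by (simp add: divide_less_eq)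
    moreover have "\<bar>\<Phi> b\<bar> \<le> C / real K'" using bound[of K'] unfolding K'_def by simp
    moreover have "real K' > 0" unfolding K'_def by simp
    ultimately have "\<bar>\<Phi> b\<bar> * real K' \<le> C" "C < \<bar>\<Phi> b\<bar> * real K'"
      by (simp_all add: le_divide_eq mult.commute)
    then show False by linarith
  qed
  then have "integral {a..b} R = F b - F a" unfolding \<Phi>_def by simp
  then show ?thesis using int by (metis has_integral_integrable_integral)
qed



locale cvx =
  fixes f :: "real \<Rightarrow> real"
  assumes conv: "convex_on {0<..<1} f"
    and inc: "\<And>s u. 0 < s \<Longrightarrow> s < u \<Longrightarrow> u < 1 \<Longrightarrow> f s < f u"
begin

definition slope :: "real \<Rightarrow> real \<Rightarrow> real" where "slope s u = (f u - f s) / (u - s)"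
definition r :: "real \<Rightarrow> real" where "r s = Inf ((\<lambda>u. slope s u) ` {s<..<1})"
definition l :: "real \<Rightarrow> real" where "l s = Sup ((\<lambda>u. slope u s) ` {0<..<s})"

lemma three:
  assumes "0 < a" "a < b" "b < c" "c < 1"
  shows "slope a b \<le> slope a c" "slope a c \<le> slope b c"
proof -
  have I: "a \<in> {0<..<1}" "c \<in> {0<..<1}" using assms by auto
  have 1: "(f a - f b) / (a - b) \<le> (f a - f c) / (a - c)"
    and 2: "(f a - f c) / (a - c) \<le> (f b - f c) / (b - c)"
    using convex_on_slope_le[OF conv I, of b] assms by auto
  have e1: "(f a - f b) / (a - b) = slope a b" unfolding slope_def
    by (metis minus_diff_eq minus_divide_divide)
  have e2: "(f a - f c) / (a - c) = slope a c" unfolding slope_def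
    by (metis minus_diff_eq minus_divide_divide)
  have e3: "(f b - f c) / (b - c) = slope b c" unfolding slope_def
    by (metis minus_diff_eq minus_divide_divide)
  show "slope a b \<le> slope a c" "slope a c \<le> slope b c" using 1 2 e1 e2 e3 by auto
qed

lemma slope_pos: "0 < s \<Longrightarrow> s < u \<Longrightarrow> u < 1 \<Longrightarrow> 0 < slope s u"
  unfolding slope_def using inc[of s u] by simp

lemma slope_sym: "slope s u = slope u s"
  unfolding slope_def by (metis minus_diff_eq minus_divide_divide)

lemma r_le: assumes "0 < s" "s < u" "u < 1" shows "r s \<le> slope s u"
  unfolding r_def
proof (rule cInf_lower)
  show "slope s u \<in> (\<lambda>u. slope s u) ` {s<..<1}" using assms by auto
  show "bdd_below ((\<lambda>u. slope s u) ` {s<..<1})"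
    using assms by (auto intro!: bdd_belowI[of _ 0] less_imp_le[OF slope_pos])
qed

lemma r_ge: assumes "0 < w" "w < s" "s < 1" shows "slope w s \<le> r s"
  unfolding r_def
proof (rule cInf_greatest)
  show "(\<lambda>u. slope s u) ` {s<..<1} \<noteq> {}" using assms by auto
  fix y assume "y \<in> (\<lambda>u. slope s u) ` {s<..<1}"
  then obtain u where u: "s < u" "u < 1" "y = slope s u" by auto
  have "slope w s \<le> slope w u" "slope w u \<le> slope s u" using three[of w s u] assms u by auto
  then show "slope w s \<le> y" using u by simp
qed

lemma l_ge: assumes "0 < w" "w < s" "s < 1" shows "slope w s \<le> l s"
  unfolding l_def
proof (rule cSup_upper)
  show "slope w s \<in> (\<lambda>u. slope u s) ` {0<..<s}" using assms by auto
  show "bdd_above ((\<lambda>u. slope u s) ` {0<..<s})"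
  proof (rule bdd_aboveI[of _ "slope s ((s+1)/2)"])
    fix y assume "y \<in> (\<lambda>u. slope u s) ` {0<..<s}"
    then obtain u where u: "0 < u" "u < s" "y = slope u s" by auto
    have "slope u s \<le> slope u ((s+1)/2)" "slope u ((s+1)/2) \<le> slope s ((s+1)/2)"
      using three[of u s "(s+1)/2"] assms u by auto
    then show "y \<le> slope s ((s+1)/2)" using u by simp
  qed
qed

lemma l_le: assumes "0 < s" "s < u" "u < 1" shows "l s \<le> slope s u"
  unfolding l_def
proof (rule cSup_least)
  show "(\<lambda>w. slope w s) ` {0<..<s} \<noteq> {}" using assms by auto
  fix y assume "y \<in> (\<lambda>w. slope w s) ` {0<..<s}"
  then obtain w where w: "0 < w" "w < s" "y = slope w s" by auto
  have "slope w s \<le> slope w u" "slope w u \<le> slope s u" using three[of w s u] assms w by auto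
  then show "y \<le> slope s u" using w by simp
qed

lemma l_le_r: assumes "0 < s" "s < 1" shows "l s \<le> r s"
proof -
  have "l s \<le> slope s u" if "s < u" "u < 1" for u using l_le assms that by auto
  then show ?thesis unfolding r_def
    by (intro cInf_greatest) (use assms in auto)
qed

lemma r_pos: assumes "0 < s" "s < 1" shows "0 < r s"
  using r_ge[of "s/2" s] slope_pos[of "s/2" s] assms by auto

lemma r_l: assumes "0 < s" "s < u" "u < 1" shows "r s \<le> l u"
  using r_le[of s u] l_ge[of s u] assms by auto

lemma r_mono: assumes "0 < s" "s \<le> u" "u < 1" shows "r s \<le> r u"
  using r_l[of s u] l_le_r[of u] assms by (cases "s = u") auto

lemma sandwich: assumes "0 < s" "s \<le> u" "u < 1"
  shows "r s * (u - s) \<le> f u - f s \<and> f u - f s \<le> r u * (u - s)"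
proof (cases "s = u")
  case False
  then have su: "s < u" using assms by simp
  have "r s \<le> slope s u" using r_le[of s u] assms su by simp
  moreover have "slope s u \<le> r u" using r_ge[of s u] assms su by simp
  ultimately show ?thesis using su unfolding slope_def by (simp add: field_simps)
qed simp

lemma deriv_r:
  assumes s: "0 < s" "s < 1" and eq: "l s = r s"
  shows "(f has_real_derivative r s) (at s)"
  unfolding has_field_derivative_iff
proof (rule tendstoI)
  fix e :: real assume e: "0 < e"
  have ne1: "(\<lambda>u. slope s u) ` {s<..<1} \<noteq> {}" using s by auto
  have "Inf ((\<lambda>u. slope s u) ` {s<..<1}) < r s + e" using e unfolding r_def by simp
  from cInf_lessD[OF ne1 this] obtain u1 where u1: "s < u1" "u1 < 1" "slope s u1 < r s + e" by auto
  have ne2: "(\<lambda>u. slope u s) ` {0<..<s} \<noteq> {}" using s by auto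
  have "l s - e < Sup ((\<lambda>u. slope u s) ` {0<..<s})" using e unfolding l_def by simp
  from less_cSupD[OF ne2 this] obtain w1 where w1: "0 < w1" "w1 < s" "l s - e < slope w1 s" by auto
  define d where "d = min (u1 - s) (s - w1)"
  have d: "0 < d" unfolding d_def using u1 w1 by simp
  show "\<forall>\<^sub>F y in at s. dist ((f y - f s) / (y - s)) (r s) < e"
    unfolding eventually_at
  proof (intro exI[of _ d] conjI ballI impI allI)
    show "0 < d" by (fact d)
    fix y assume y: "y \<noteq> s \<and> dist y s < d"
    have q: "(f y - f s) / (y - s) = slope s y" unfolding slope_def by simp
    show "dist ((f y - f s) / (y - s)) (r s) < e"
    proof (cases "y > s")
      case True
      then have "y < u1" using y unfolding d_def dist_real_def by auto
      then have "slope s y \<le> slope s u1" using three[of s y u1] s u1 True by auto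
      moreover have "r s \<le> slope s y" using r_le[of s y] s True \<open>y < u1\<close> u1 by auto
      ultimately show ?thesis using q u1 by (simp add: dist_real_def)
    next
      case False
      then have ys: "y < s" using y by auto
      then have "w1 < y" using y unfolding d_def dist_real_def by auto
      then have "slope w1 s \<le> slope y s" using three[of w1 y s] s ys w1 by auto
      moreover have "slope y s \<le> l s" using l_ge[of y s] s ys \<open>w1 < y\<close> w1 by auto
      ultimately show ?thesis using q w1 eq slope_sym[of s y] by (simp add: dist_real_def)
    qed
  qed
qed

definition N :: "real set" where "N = {s \<in> {0<..<1}. l s \<noteq> r s}"

lemma N_countable: "countable N"
proof -
  have ex: "\<exists>q. q \<in> \<rat> \<and> l s < q \<and> q < r s" if "s \<in> N" for s
  proof -
    have "l s < r s" using that l_le_r unfolding N_def by (auto simp: order.order_iff_strict)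
    then show ?thesis using Rats_dense_in_real by meson
  qed
  define q where "q s = (SOME q. q \<in> \<rat> \<and> l s < q \<and> q < r s)" for s
  have q: "q s \<in> \<rat> \<and> l s < q s \<and> q s < r s" if "s \<in> N" for s
    unfolding q_def using someI_ex[OF ex[OF that]] by blast
  have inj: "inj_on q N"
  proof (rule linorder_inj_onI)
    fix s1 s2 assume "s1 < s2" "s1 \<in> N" "s2 \<in> N"
    then have "q s1 < r s1" "r s1 \<le> l s2" "l s2 < q s2"
      using q r_l[of s1 s2] unfolding N_def by auto
    then show "q s1 \<noteq> q s2" by simp
  next
    fix x y assume "x \<in> N" "y \<in> N" then show "x \<le> y \<or> y \<le> x" by auto
  qed
  have "q ` N \<subseteq> \<rat>" using q by auto
  then have "countable (q ` N)" using countable_rat countable_subset by blast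
  then show ?thesis using countable_image_inj_on inj by blast
qed

lemma deriv_eq_r: "s \<in> {0<..<1} - N \<Longrightarrow> deriv f s = r s"
  using deriv_r[of s] DERIV_imp_deriv unfolding N_def by auto

lemma diff_off_N: "s \<in> {0<..<1} - N \<Longrightarrow> (f has_real_derivative r s) (at s)"
  using deriv_r[of s] unfolding N_def by auto

lemma FTC_r: "0 < a \<Longrightarrow> a \<le> b \<Longrightarrow> b < 1 \<Longrightarrow> (r has_integral (f b - f a)) {a..b}"
  by (rule sandwich_FTC) (use sandwich in auto)

end


lemma powr_sandwich:
  fixes x y m :: real
  assumes "0 < x" "x \<le> y" "1 \<le> m"
  shows "m * x powr (m - 1) * (y - x) \<le> y powr m - x powr m \<and> y powr m - x powr m \<le> m * y powr (m - 1) * (y - x)"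
proof (cases "x = y")
  case False
  then have xy: "x < y" using assms by simp
  have "\<And>z. x \<le> z \<Longrightarrow> z \<le> y \<Longrightarrow> ((\<lambda>z. z powr m) has_real_derivative m * z powr (m - 1)) (at z)"
    using assms by (intro has_real_derivative_powr) auto
  from MVT2[OF xy this] obtain z where z: "x < z" "z < y" "y powr m - x powr m = (y - x) * (m * z powr (m - 1))"
    by blast
  have "x powr (m - 1) \<le> z powr (m - 1)" "z powr (m - 1) \<le> y powr (m - 1)"
    using z assms by (auto intro!: powr_mono2)
  then have "m * x powr (m - 1) \<le> m * z powr (m - 1)" "m * z powr (m - 1) \<le> m * y powr (m - 1)"
    using assms by auto
  then show ?thesis using z xy by (auto simp: mult.commute intro: mult_right_mono)
qed simp

lemma nn_FTC_lim:
  fixes Ff Rf :: "real \<Rightarrow> real" and \<sigma> L :: real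
  assumes \<sigma>: "0 < \<sigma>" "\<sigma> \<le> 1"
    and nonneg: "\<And>s. 0 \<le> Rf s"
    and meas: "Rf \<in> borel_measurable borel"
    and ftc: "\<And>a b. 0 < a \<Longrightarrow> a \<le> b \<Longrightarrow> b < 1 \<Longrightarrow> (Rf has_integral (Ff b - Ff a)) {a..b}"
    and lim: "(\<lambda>k. Ff (\<sigma> * (real k + 1) / (real k + 2)) - Ff (\<sigma> / (real k + 2))) \<longlonglongrightarrow> L"
  shows "(\<integral>\<^sup>+ s. ennreal (Rf s) * indicator {0<..<\<sigma>} s \<partial>lborel) = ennreal L"
proof -
  define a where "a k = \<sigma> / (real k + 2)" for k :: nat
  define b where "b k = \<sigma> * (real k + 1) / (real k + 2)" for k :: nat
  have a0: "0 < a k" for k using \<sigma> unfolding a_def by simp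
  have ab: "a k \<le> b k" for k using \<sigma> unfolding a_def b_def by (simp add: divide_right_mono)
  have b1: "b k < \<sigma>" for k using \<sigma> unfolding b_def by (simp add: field_simps)
  have amono: "a (Suc k) \<le> a k" for k using \<sigma> unfolding a_def by (simp add: frac_le)
  have bmono: "b k \<le> b (Suc k)" for k using \<sigma> unfolding b_def by (simp add: field_simps)
  define fk where "fk k s = ennreal (Rf s) * indicator {a k..b k} s" for k s
  have bk1: "b k < 1" for k using b1[of k] \<sigma> by linarith
  have int_k: "integral\<^sup>N lborel (fk k) = ennreal (Ff (b k) - Ff (a k))" for k
    unfolding fk_def
    by (rule nn_integral_has_integral_lebesgue'[OF nonneg ftc[OF a0 ab bk1]])
  have inc: "incseq fk"
    unfolding incseq_def fk_def
  proof (intro allI impI le_funI)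
    fix k k' :: nat and s assume "k \<le> k'"
    have "decseq a" by (rule decseq_SucI) (rule amono)
    moreover have "incseq b" by (rule incseq_SucI) (rule bmono)
    ultimately have "a k' \<le> a k" "b k \<le> b k'"
      using \<open>k \<le> k'\<close> by (auto dest: decseqD incseqD)
    then show "ennreal (Rf s) * indicator {a k..b k} s \<le> ennreal (Rf s) * indicator {a k'..b k'} s"
      by (auto simp: indicator_def)
  qed
  have fk_meas: "fk k \<in> borel_measurable lborel" for k unfolding fk_def using meas by measurable
  have pt: "(\<lambda>k. fk k s) \<longlonglongrightarrow> ennreal (Rf s) * indicator {0<..<\<sigma>} s" for s
  proof (cases "s \<in> {0<..<\<sigma>}")
    case True
    then have s: "0 < s" "s < \<sigma>" by auto
    obtain K :: nat where K: "max (\<sigma> / s) (\<sigma> / (\<sigma> - s)) \<le> real K" using real_arch_simple by blast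
    have "eventually (\<lambda>k. fk k s = ennreal (Rf s) * indicator {0<..<\<sigma>} s) sequentially"
      unfolding eventually_sequentially
    proof (intro exI[of _ K] allI impI)
      fix k assume "K \<le> k"
      then have k1: "\<sigma> / s \<le> real k + 2" and k2: "\<sigma> / (\<sigma> - s) \<le> real k + 2" using K by auto
      have "a k \<le> s" unfolding a_def using k1 s by (simp add: field_simps)
      moreover have "s \<le> b k"
      proof -
        have "\<sigma> \<le> (real k + 2) * (\<sigma> - s)" using k2 s by (simp add: field_simps)
        then show ?thesis unfolding b_def using s by (simp add: field_simps)
      qed
      ultimately show "fk k s = ennreal (Rf s) * indicator {0<..<\<sigma>} s"
        unfolding fk_def using True by simp
    qed
    then show ?thesis by (rule tendsto_eventually)
  next
    case False
    then have "s \<notin> {a k..b k}" for k using a0[of k] b1[of k] by auto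
    then show ?thesis using False unfolding fk_def by simp
  qed
  have "(\<lambda>k. integral\<^sup>N lborel (fk k)) \<longlonglongrightarrow> (\<integral>\<^sup>+ s. ennreal (Rf s) * indicator {0<..<\<sigma>} s \<partial>lborel)"
    by (rule nn_integral_LIMSEQ[OF inc fk_meas pt])
  moreover have "(\<lambda>k. integral\<^sup>N lborel (fk k)) \<longlonglongrightarrow> ennreal L"
    unfolding int_k using lim unfolding a_def b_def by (intro tendsto_ennrealI)
  ultimately show ?thesis using LIMSEQ_unique by blast
qed


locale main = cvx f for f +
  fixes c :: real and n :: nat and m :: real and K :: real
  assumes c: "0 < c" and n: "0 < n" and m: "2 \<le> m"
    and fpos: "\<And>s. 0 < s \<Longrightarrow> s < 1 \<Longrightarrow> 0 < f s"
    and fbd: "\<And>s. 0 < s \<Longrightarrow> s < 1 \<Longrightarrow> f s \<le> K"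
    and flim: "(f \<longlongrightarrow> 0) (at_right 0)"
begin

definition rr :: "real \<Rightarrow> real" where "rr s = indicator {0<..<1} s * r s"
definition ff :: "real \<Rightarrow> real" where "ff s = indicator {0<..<1} s * f s"
definition Rad :: "real \<Rightarrow> real" where "Rad s = (c * rr s) powr (- 1 / real n)"
definition Gm :: "real \<Rightarrow> real" where "Gm s = m * ff s powr (m - 1) * rr s"

lemma rr_meas[measurable]: "rr \<in> borel_measurable borel"
proof -
  have "mono_on {0<..<1} r" by (rule mono_onI) (use r_mono in auto)
  then have "r \<in> borel_measurable (restrict_space borel {0<..<1})" by (rule borel_measurable_mono_on_fnc)
  then have "(\<lambda>x. indicator {0<..<1} x *\<^sub>R r x) \<in> borel_measurable borel"
    by (subst borel_measurable_restrict_space_iff[symmetric]) auto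
  then show ?thesis unfolding rr_def by simp
qed

lemma ff_meas[measurable]: "ff \<in> borel_measurable borel"
proof -
  have "mono_on {0<..<1} f" by (rule mono_onI) (use inc in \<open>auto simp: order.order_iff_strict\<close>)
  then have "f \<in> borel_measurable (restrict_space borel {0<..<1})" by (rule borel_measurable_mono_on_fnc)
  then have "(\<lambda>x. indicator {0<..<1} x *\<^sub>R f x) \<in> borel_measurable borel"
    by (subst borel_measurable_restrict_space_iff[symmetric]) auto
  then show ?thesis unfolding ff_def by simp
qed

lemma Rad_meas[measurable]: "Rad \<in> borel_measurable borel" unfolding Rad_def by measurable
lemma Gm_meas[measurable]: "Gm \<in> borel_measurable borel" unfolding Gm_def by measurable

lemma rr_nonneg: "0 \<le> rr s" unfolding rr_def using r_pos by (auto simp: indicator_def less_imp_le)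
lemma ff_nonneg: "0 \<le> ff s" unfolding ff_def using fpos by (auto simp: indicator_def less_imp_le)
lemma Gm_nonneg: "0 \<le> Gm s" unfolding Gm_def using rr_nonneg ff_nonneg m by simp

lemma rr_in: "0 < s \<Longrightarrow> s < 1 \<Longrightarrow> rr s = r s" unfolding rr_def by simp
lemma ff_in: "0 < s \<Longrightarrow> s < 1 \<Longrightarrow> ff s = f s" unfolding ff_def by simp
lemma rr_out: "\<not> (0 < s \<and> s < 1) \<Longrightarrow> rr s = 0" unfolding rr_def by simp

lemma Rad_out: "\<not> (0 < s \<and> s < 1) \<Longrightarrow> Rad s = 0" unfolding Rad_def using rr_out by simp

lemma Rad_antimono: "0 < s1 \<Longrightarrow> s1 \<le> s2 \<Longrightarrow> s2 < 1 \<Longrightarrow> Rad s2 \<le> Rad s1"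
  unfolding Rad_def using rr_in r_mono r_pos c n
  by (intro powr_mono2') (auto intro!: mult_left_mono mult_pos_pos)

lemma FTC_rr: "0 < a \<Longrightarrow> a \<le> b \<Longrightarrow> b < 1 \<Longrightarrow> (rr has_integral (f b - f a)) {a..b}"
  using FTC_r[of a b] by (subst has_integral_cong[where g=r]) (auto simp: rr_in)

lemma FTC_Gm: "0 < a \<Longrightarrow> a \<le> b \<Longrightarrow> b < 1 \<Longrightarrow> (Gm has_integral (f b powr m - f a powr m)) {a..b}"
proof -
  assume ab: "0 < a" "a \<le> b" "b < 1"
  have "((\<lambda>s. m * f s powr (m - 1) * r s) has_integral (f b powr m - f a powr m)) {a..b}"
  proof (rule sandwich_FTC[OF _ ab])
    fix s u :: real assume su: "0 < s" "s \<le> u" "u < 1"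
    have fsu: "f s \<le> f u" using inc[of s u] su by (cases "s = u") auto
    have ps: "m * f s powr (m - 1) * (f u - f s) \<le> f u powr m - f s powr m \<and>
              f u powr m - f s powr m \<le> m * f u powr (m - 1) * (f u - f s)"
      by (rule powr_sandwich) (use fpos su fsu m in auto)
    have sw: "r s * (u - s) \<le> f u - f s \<and> f u - f s \<le> r u * (u - s)" by (rule sandwich) (use su in auto)
    have nn: "0 \<le> m * f s powr (m - 1)" "0 \<le> m * f u powr (m - 1)" using m by auto
    have "m * f s powr (m - 1) * r s * (u - s) = m * f s powr (m - 1) * (r s * (u - s))" by simp
    also have "\<dots> \<le> m * f s powr (m - 1) * (f u - f s)" using sw nn by (intro mult_left_mono) auto
    finally have 1: "m * f s powr (m - 1) * r s * (u - s) \<le> f u powr m - f s powr m" using ps by linarith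
    have "m * f u powr (m - 1) * (f u - f s) \<le> m * f u powr (m - 1) * (r u * (u - s))"
      using sw nn by (intro mult_left_mono) auto
    then have 2: "f u powr m - f s powr m \<le> m * f u powr (m - 1) * r u * (u - s)" using ps by simp
    show "m * f s powr (m - 1) * r s * (u - s) \<le> f u powr m - f s powr m \<and>
          f u powr m - f s powr m \<le> m * f u powr (m - 1) * r u * (u - s)" using 1 2 by simp
  qed
  then show ?thesis
    by (subst has_integral_cong[where g="\<lambda>s. m * f s powr (m - 1) * r s"]) (use ab in \<open>auto simp: Gm_def rr_in ff_in\<close>)
qed

end


context main begin

lemma seq_a_0: "0 < \<sigma> \<Longrightarrow> (\<lambda>k. \<sigma> / (real k + 2)) \<longlonglongrightarrow> 0"
proof -
  have "filterlim (\<lambda>k::nat. 2 + real k) at_top sequentially"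
    by (rule filterlim_tendsto_add_at_top[OF tendsto_const filterlim_real_sequentially])
  then have "filterlim (\<lambda>k::nat. real k + 2) at_top sequentially" by (simp add: add.commute)
  then show ?thesis by (intro tendsto_divide_0[OF tendsto_const] filterlim_at_top_imp_at_infinity)
qed

lemma nu_lemma:
  assumes \<nu>: "0 \<le> \<nu>"
  shows "0 \<le> (\<integral> s. (if \<nu> < Rad s then rr s else 0) \<partial>lborel) \<and>
    ennreal ((\<integral> s. (if \<nu> < Rad s then rr s else 0) \<partial>lborel) powr m) =
      (\<integral>\<^sup>+ s. ennreal (if \<nu> < Rad s then Gm s else 0) \<partial>lborel)"
proof -
  define P where "P = (\<integral> s. (if \<nu> < Rad s then rr s else 0) \<partial>lborel)"
  define D where "D = {s. 0 < s \<and> s < 1 \<and> \<nu> < Rad s}"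
  have Pint: "P = enn2real (\<integral>\<^sup>+ s. ennreal (if \<nu> < Rad s then rr s else 0) \<partial>lborel)"
    unfolding P_def by (rule integral_eq_nn_integral) (auto simp: rr_nonneg)
  show ?thesis
  proof (cases "D = {}")
    case True
    then have z: "\<not> \<nu> < Rad s" for s
      using Rad_out[of s] \<nu> unfolding D_def by (cases "0 < s \<and> s < 1") auto
    then show ?thesis unfolding P_def[symmetric] Pint by (simp add: z)
  next
    case False
    define \<sigma> where "\<sigma> = Sup D"
    have bdd: "bdd_above D" unfolding D_def by (auto intro: bdd_aboveI[of _ 1])
    obtain d where d: "d \<in> D" using False by auto
    have \<sigma>0: "0 < \<sigma>" using cSup_upper[OF d bdd] d unfolding \<sigma>_def D_def by auto
    have \<sigma>1: "\<sigma> \<le> 1" unfolding \<sigma>_def by (rule cSup_least[OF False]) (auto simp: D_def)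
    have key: "(\<nu> < Rad s) \<longleftrightarrow> s \<in> {0<..<\<sigma>}" if "s \<noteq> \<sigma>" for s
    proof (cases "0 < s \<and> s < 1")
      case False
      then show ?thesis using Rad_out[of s] \<nu> \<sigma>1 by auto
    next
      case True
      show ?thesis
      proof
        assume "\<nu> < Rad s"
        then have "s \<in> D" using True unfolding D_def by auto
        then have "s \<le> \<sigma>" unfolding \<sigma>_def by (rule cSup_upper[OF _ bdd])
        then show "s \<in> {0<..<\<sigma>}" using that True by auto
      next
        assume "s \<in> {0<..<\<sigma>}"
        then have "s < Sup D" unfolding \<sigma>_def by simp
        then obtain e where e: "e \<in> D" "s < e" using less_cSupD[OF False] by blast
        then have "Rad e \<le> Rad s" using True unfolding D_def by (intro Rad_antimono) auto
        then show "\<nu> < Rad s" using e unfolding D_def by auto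
      qed
    qed
    have AEk: "AE s in lborel. (\<nu> < Rad s) \<longleftrightarrow> s \<in> {0<..<\<sigma>}"
      using AE_lborel_singleton[of \<sigma>] by eventually_elim (use key in blast)
    define a where "a k = \<sigma> / (real k + 2)" for k :: nat
    define b where "b k = \<sigma> * (real k + 1) / (real k + 2)" for k :: nat
    have a0: "0 < a k" for k using \<sigma>0 unfolding a_def by simp
    have b0: "0 < b k" for k using \<sigma>0 unfolding b_def by simp
    have b1: "b k < 1" for k
    proof -
      have "\<sigma> * (real k + 1) \<le> 1 * (real k + 1)" using \<sigma>1 by (intro mult_right_mono) auto
      then show ?thesis unfolding b_def by (simp add: field_simps)
    qed
    have ak1: "a k < 1" for k
    proof -
      have "\<sigma> < real k + 2" using \<sigma>1 by simp
      then show ?thesis unfolding a_def by (simp add: field_simps)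
    qed
    have bmono: "b k \<le> b (Suc k)" for k using \<sigma>0 unfolding b_def by (simp add: field_simps)
    have incb: "incseq (\<lambda>k. f (b k))"
    proof (rule incseq_SucI)
      fix k show "f (b k) \<le> f (b (Suc k))"
        using inc[OF b0[of k] _ b1[of "Suc k"]] bmono[of k] by (cases "b k = b (Suc k)") auto
    qed
    define L where "L = (SUP k. f (b k))"
    have fb: "(\<lambda>k. f (b k)) \<longlonglongrightarrow> L" unfolding L_def
      by (rule LIMSEQ_incseq_SUP[OF _ incb]) (use fbd b0 b1 in \<open>auto intro!: bdd_aboveI[of _ K]\<close>)
    have L0: "0 < L"
    proof -
      have "f (b 0) \<le> L" using incb fb by (intro incseq_le) auto
      then show ?thesis using fpos[OF b0[of 0] b1[of 0]] by simp
    qed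
    have "a \<longlonglongrightarrow> 0" unfolding a_def by (rule seq_a_0[OF \<sigma>0])
    then have "filterlim a (at_right 0) sequentially"
      by (rule tendsto_imp_filterlim_at_right) (use a0 in auto)
    then have fa: "(\<lambda>k. f (a k)) \<longlonglongrightarrow> 0" by (rule filterlim_compose[OF flim])
    have lim1: "(\<lambda>k. f (b k) - f (a k)) \<longlonglongrightarrow> L" using tendsto_diff[OF fb fa] by simp
    have fbm: "(\<lambda>k. f (b k) powr m) \<longlonglongrightarrow> L powr m"
      using L0 by (intro tendsto_powr fb tendsto_const) auto
    have fam: "(\<lambda>k. f (a k) powr m) \<longlonglongrightarrow> 0"
      using m by (intro tendsto_zero_powrI fa tendsto_const always_eventually allI less_imp_le[OF fpos[OF a0 ak1]]) auto
    have lim2: "(\<lambda>k. f (b k) powr m - f (a k) powr m) \<longlonglongrightarrow> L powr m" using tendsto_diff[OF fbm fam] by simp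
    have I1: "(\<integral>\<^sup>+ s. ennreal (rr s) * indicator {0<..<\<sigma>} s \<partial>lborel) = ennreal L"
      by (rule nn_FTC_lim[OF \<sigma>0 \<sigma>1 rr_nonneg rr_meas FTC_rr]) (use lim1 in \<open>simp_all add: a_def b_def\<close>)
    have I2: "(\<integral>\<^sup>+ s. ennreal (Gm s) * indicator {0<..<\<sigma>} s \<partial>lborel) = ennreal (L powr m)"
      by (rule nn_FTC_lim[where Ff="\<lambda>s. f s powr m", OF \<sigma>0 \<sigma>1 Gm_nonneg Gm_meas FTC_Gm])
        (use lim2 in \<open>simp_all add: a_def b_def\<close>)
    have J1: "(\<integral>\<^sup>+ s. ennreal (if \<nu> < Rad s then rr s else 0) \<partial>lborel) = (\<integral>\<^sup>+ s. ennreal (rr s) * indicator {0<..<\<sigma>} s \<partial>lborel)"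
      by (rule nn_integral_cong_AE) (use AEk in \<open>eventually_elim, auto\<close>)
    have J2: "(\<integral>\<^sup>+ s. ennreal (if \<nu> < Rad s then Gm s else 0) \<partial>lborel) = (\<integral>\<^sup>+ s. ennreal (Gm s) * indicator {0<..<\<sigma>} s \<partial>lborel)"
      by (rule nn_integral_cong_AE) (use AEk in \<open>eventually_elim, auto\<close>)
    have "P = L" unfolding Pint J1 I1 using L0 by simp
    then show ?thesis unfolding P_def[symmetric] J2 I2 using L0 by simp
  qed
qed

end


context main begin

lemma main_int:
  assumes cdef: "c = unit_ball_volume TYPE('a::euclidean_space)" and ndef: "n = DIM('a)"
  shows "(\<integral>x. (\<integral> s. (if norm (x::'a) < Rad s then rr s else 0) \<partial>lborel) powr m \<partial>lebesgue)
     = m * (\<integral> s. ff s powr (m - 1) \<partial>lborel)"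
proof -
  define \<rho> where "\<rho> x = (\<integral> s. (if norm (x::'a) < Rad s then rr s else 0) \<partial>lborel)" for x
  have \<rho>meas: "\<rho> \<in> borel_measurable lborel" unfolding \<rho>_def by measurable
  have nl: "0 \<le> \<rho> x \<and> ennreal (\<rho> x powr m) = (\<integral>\<^sup>+ s. ennreal (if norm x < Rad s then Gm s else 0) \<partial>lborel)" for x
    unfolding \<rho>_def by (rule nu_lemma) simp
  have cval: "c = unit_ball_vol (real DIM('a))"
  proof -
    have "emeasure lborel (ball (0::'a) 1) = ennreal (unit_ball_vol (real DIM('a)))"
      using emeasure_ball[of 1 "0::'a"] by simp
    then have "measure lborel (ball (0::'a) 1) = unit_ball_vol (real DIM('a))"
      by (simp add: measure_def)
    then show ?thesis unfolding cdef unit_ball_volume_def by (simp add: measure_completion)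
  qed
  have inner: "(\<integral>\<^sup>+ x. ennreal (if norm (x::'a) < Rad s then Gm s else 0) \<partial>lborel)
      = ennreal (m * ff s powr (m - 1))" for s
  proof -
    have e1: "(\<integral>\<^sup>+ x. ennreal (if norm (x::'a) < Rad s then Gm s else 0) \<partial>lborel)
        = (\<integral>\<^sup>+ x. ennreal (Gm s) * indicator (ball (0::'a) (Rad s)) x \<partial>lborel)"
      by (intro nn_integral_cong) (simp add: indicator_def dist_norm)
    have e2: "(\<integral>\<^sup>+ x. ennreal (Gm s) * indicator (ball (0::'a) (Rad s)) x \<partial>lborel)
       = ennreal (Gm s) * emeasure lborel (ball (0::'a) (Rad s))"
      by (rule nn_integral_cmult_indicator) simp
    have e3: "ennreal (Gm s) * emeasure lborel (ball (0::'a) (Rad s)) = ennreal (m * ff s powr (m - 1))"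
    proof (cases "0 < s \<and> s < 1")
      case True
      have rpos: "0 < r s" using r_pos True by auto
      have crpos: "0 < c * rr s" using rpos c True by (simp add: rr_in)
      have R0: "0 < Rad s" unfolding Rad_def using crpos by (metis powr_gt_zero less_irrefl)
      have "Rad s ^ DIM('a) = Rad s powr (real DIM('a))"
        using R0 by (simp add: powr_realpow)
      also have "\<dots> = (c * rr s) powr (- 1)" unfolding Rad_def
        using crpos n ndef by (simp add: powr_powr)
      also have "\<dots> = 1 / (c * r s)" using crpos True by (simp add: powr_minus divide_inverse rr_in)
      finally have Rn: "Rad s ^ DIM('a) = 1 / (c * r s)" .
      have "emeasure lborel (ball (0::'a) (Rad s)) = ennreal (unit_ball_vol (real DIM('a)) * Rad s ^ DIM('a))"
        using emeasure_ball[of "Rad s" "0::'a"] R0 by simp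
      also have "\<dots> = ennreal (c * (1 / (c * r s)))" unfolding cval[symmetric] Rn ..
      also have "c * (1 / (c * r s)) = 1 / r s" using c rpos by (simp add: field_simps)
      finally have em: "emeasure lborel (ball (0::'a) (Rad s)) = ennreal (1 / r s)" .
      have "ennreal (Gm s) * ennreal (1 / r s) = ennreal (Gm s * (1 / r s))"
        by (rule ennreal_mult[symmetric]) (use Gm_nonneg rpos in auto)
      also have "Gm s * (1 / r s) = m * ff s powr (m - 1)"
        unfolding Gm_def using rpos True by (simp add: rr_in)
      finally show ?thesis unfolding em .
    next
      case False
      then show ?thesis unfolding Gm_def ff_def using rr_out[OF False] by simp
    qed
    show ?thesis using e1 e2 e3 by simp
  qed
  have A: "(\<integral>x. \<rho> x powr m \<partial>lebesgue) = enn2real (\<integral>\<^sup>+ x. ennreal (\<rho> x powr m) \<partial>lebesgue)"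
    by (rule integral_eq_nn_integral) (use \<rho>meas in \<open>auto intro!: measurable_completion\<close>)
  have "(\<integral>\<^sup>+ x. ennreal (\<rho> x powr m) \<partial>lebesgue) = (\<integral>\<^sup>+ x. ennreal (\<rho> x powr m) \<partial>lborel)"
    by (rule nn_integral_completion)
  also have "\<dots> = (\<integral>\<^sup>+ x. (\<integral>\<^sup>+ s. ennreal (if norm (x::'a) < Rad s then Gm s else 0) \<partial>lborel) \<partial>lborel)"
    by (intro nn_integral_cong) (use nl in blast)
  also have "\<dots> = (\<integral>\<^sup>+ s. (\<integral>\<^sup>+ x. ennreal (if norm (x::'a) < Rad s then Gm s else 0) \<partial>lborel) \<partial>lborel)"
    by (rule lborel_pair.Fubini'[symmetric]) measurable
  also have "\<dots> = (\<integral>\<^sup>+ s. ennreal (m * ff s powr (m - 1)) \<partial>lborel)"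
    using inner by simp
  finally have B: "(\<integral>\<^sup>+ x. ennreal (\<rho> x powr m) \<partial>lebesgue) = (\<integral>\<^sup>+ s. ennreal (m * ff s powr (m - 1)) \<partial>lborel)" .
  have C: "(\<integral> s. m * ff s powr (m - 1) \<partial>lborel) = enn2real (\<integral>\<^sup>+ s. ennreal (m * ff s powr (m - 1)) \<partial>lborel)"
    by (rule integral_eq_nn_integral) (use m in auto)
  have "(\<integral>x. \<rho> x powr m \<partial>lebesgue) = (\<integral> s. m * ff s powr (m - 1) \<partial>lborel)"
    using A B C by simp
  also have "\<dots> = m * (\<integral> s. ff s powr (m - 1) \<partial>lborel)" by simp
  finally show ?thesis unfolding \<rho>_def .
qed

end


context main begin

lemma rho_eq:
  assumes ndef: "n = DIM('a::euclidean_space)"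
  shows "(LINT s:{0<..<1}|lborel. indicator (ball (0::'a) ((c * deriv f s) powr (- 1 / real n))) x * deriv f s)
       = (\<integral> s. (if norm x < Rad s then rr s else 0) \<partial>lborel)"
proof -
  define g where "g s = (if norm x < Rad s then rr s else 0)" for s
  define g' where "g' s = indicator {0<..<1} s *\<^sub>R (indicator (ball (0::'a) ((c * deriv f s) powr (- 1 / real n))) x * deriv f s)" for s
  have eq: "g s = g' s" if "s \<notin> N" for s
  proof (cases "0 < s \<and> s < 1")
    case True
    then have "deriv f s = r s" using deriv_eq_r that by auto
    then show ?thesis unfolding g_def g'_def Rad_def using True by (simp add: rr_in indicator_def dist_norm)
  next
    case False
    then show ?thesis unfolding g_def g'_def using Rad_out[OF False] by auto
  qed
  have gm: "g \<in> borel_measurable lborel" unfolding g_def by measurable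
  have g'm: "g' \<in> borel_measurable lborel"
    by (rule measurable_discrete_difference[OF gm N_countable]) (use eq in auto)
  have "(\<integral> s. g' s \<partial>lborel) = (\<integral> s. g s \<partial>lborel)"
  proof (rule integral_cong_AE[OF g'm gm])
    show "AE s in lborel. g' s = g s"
      using AE_not_in[OF countable_imp_null_set_lborel[OF N_countable]] by eventually_elim (use eq in auto)
  qed
  then show ?thesis unfolding set_lebesgue_integral_def g_def g'_def by simp
qed

end

lemma unit_ball_volume_pos: "0 < unit_ball_volume TYPE('a::euclidean_space)"
proof -
  have "emeasure lborel (ball (0::'a) 1) = ennreal (unit_ball_vol (real DIM('a)))"
    using emeasure_ball[of 1 "0::'a"] by simp
  then have "measure lborel (ball (0::'a) 1) = unit_ball_vol (real DIM('a))"
    by (simp add: measure_def)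
  then show ?thesis unfolding unit_ball_volume_def by (simp add: measure_completion)
qed


theorem proposition2p3:
  fixes \<rho>0 \<rho>1 :: "'a::euclidean_space \<Rightarrow> real"
    and h0 h1 :: "real \<Rightarrow> real"
    and m :: real
  assumes "prob_density_Linf \<rho>0" and "prob_density_Linf \<rho>1"
    and "radially_decreasing \<rho>0" and "radially_decreasing \<rho>1"
    and "is_height_function \<rho>0 h0" and "is_height_function \<rho>1 h1"
    and "m \<ge> 2"
  shows "convex_on {0<..<1} (\<lambda>t. S_functional m (interp_curve h0 h1 t :: 'a \<Rightarrow> real))"
proof -
  interpret A0: hfun \<rho>0 h0 using assms(1,5) by unfold_locales
  interpret A1: hfun \<rho>1 h1 using assms(2,6) by unfold_locales
  obtain K0 where K0: "\<forall>s\<in>{0<..<1}. h0 s \<le> K0" using A0.hbound by blast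
  obtain K1 where K1: "\<forall>s\<in>{0<..<1}. h1 s \<le> K1" using A1.hbound by blast
  define K where "K = max K0 K1"
  define ht where "ht t s = (1 - t) * h0 s + t * h1 s" for t s :: real
  define P where "P t s = (indicator {0<..<1} s * ht t s) powr (m - 1)" for t s :: real
  define Q where "Q t = (\<integral> s. P t s \<partial>lborel)" for t
  have m2: "2 \<le> m" by (fact assms(7))
  have tfacts: "S_functional m (interp_curve h0 h1 t :: 'a \<Rightarrow> real) = m / (m - 1) * Q t \<and> integrable lborel (P t)"
    if t: "0 < t" "t < 1" for t
  proof -
    interpret M: main "ht t" "unit_ball_volume TYPE('a)" "DIM('a)" m K
    proof unfold_locales
      show "convex_on {0<..<1} (ht t)" unfolding ht_def using t A0.hconvex A1.hconvex
        by (intro convex_on_add convex_on_cmul) auto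
      fix s u :: real assume su: "0 < s" "s < u" "u < 1"
      have "h0 s < h0 u" "h1 s < h1 u" using A0.hmono A1.hmono su by auto
      then have "(1 - t) * h0 s < (1 - t) * h0 u" "t * h1 s < t * h1 u" using t by auto
      then show "ht t s < ht t u" unfolding ht_def by simp
    next
      show "0 < unit_ball_volume TYPE('a)" by (rule unit_ball_volume_pos)
      show "0 < DIM('a)" by simp
      show "2 \<le> m" by (fact m2)
    next
      fix s :: real assume s: "0 < s" "s < 1"
      then have "0 < h0 s" "0 < h1 s" using A0.hpos A1.hpos by auto
      then have "0 < (1 - t) * h0 s" "0 < t * h1 s" using t by auto
      then show "0 < ht t s" unfolding ht_def by simp
    next
      fix s :: real assume s: "0 < s" "s < 1"
      have "h0 s \<le> K0" "h1 s \<le> K1" using K0 K1 s by auto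
      then have "h0 s \<le> K" "h1 s \<le> K" unfolding K_def by linarith+
      then have "(1 - t) * h0 s \<le> (1 - t) * K" "t * h1 s \<le> t * K" using t by (auto intro: mult_left_mono)
      then show "ht t s \<le> K" unfolding ht_def by (simp add: algebra_simps)
    next
      show "(ht t \<longlongrightarrow> 0) (at_right 0)" unfolding ht_def
        using tendsto_add[OF tendsto_mult[OF tendsto_const A0.hlim0] tendsto_mult[OF tendsto_const A1.hlim0]]
        by simp
    qed
    have Pff: "P t s = M.ff s powr (m - 1)" for s unfolding P_def M.ff_def ..
    have rho: "interp_curve h0 h1 t x = (\<integral> s. (if norm x < M.Rad s then M.rr s else 0) \<partial>lborel)" for x :: 'a
      unfolding interp_curve_def Let_def ht_def[symmetric]
      by (rule M.rho_eq) simp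
    have "S_functional m (interp_curve h0 h1 t :: 'a \<Rightarrow> real)
        = 1 / (m - 1) * (\<integral>x. (\<integral> s. (if norm (x::'a) < M.Rad s then M.rr s else 0) \<partial>lborel) powr m \<partial>lebesgue)"
      unfolding S_functional_def rho ..
    also have "\<dots> = 1 / (m - 1) * (m * Q t)"
      unfolding M.main_int[OF refl refl] Q_def Pff ..
    finally have S: "S_functional m (interp_curve h0 h1 t :: 'a \<Rightarrow> real) = m / (m - 1) * Q t" by simp
    have int: "integrable lborel (P t)"
    proof (rule Bochner_Integration.integrable_bound)
      show "integrable lborel (\<lambda>s::real. indicator {0<..<1} s * K powr (m - 1))"
        by (intro integrable_mult_left integrable_real_indicator) (auto simp: emeasure_lborel_Ioo)
      show "P t \<in> borel_measurable lborel" unfolding Pff[abs_def] by measurable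
      show "AE s in lborel. norm (P t s) \<le> norm (indicator {0<..<1} s * K powr (m - 1))"
      proof (rule AE_I2)
        fix s
        show "norm (P t s) \<le> norm (indicator {0<..<1} s * K powr (m - 1))"
        proof (cases "0 < s \<and> s < 1")
          case True
          then have "0 < ht t s" "ht t s \<le> K" using M.fpos M.fbd by auto
          then have "ht t s powr (m - 1) \<le> K powr (m - 1)" using m2 by (intro powr_mono2) auto
          then show ?thesis unfolding P_def using True by simp
        next
          case False
          then show ?thesis unfolding P_def by simp
        qed
      qed
    qed
    show ?thesis using S int by simp
  qed
  have Pnn: "0 \<le> P t s" for t s unfolding P_def by simp
  have Qconv: "convex_on {0<..<1} Q"
    unfolding convex_on_def
  proof (intro conjI ballI allI impI)
    show "convex {0<..<1::real}" by simp
    fix t1 t2 u v :: real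
    assume t: "t1 \<in> {0<..<1}" "t2 \<in> {0<..<1}" and uv: "0 \<le> u" "0 \<le> v" "u + v = 1"
    have tin: "u *\<^sub>R t1 + v *\<^sub>R t2 \<in> {0<..<1}"
      using convexD[OF convex_real_interval(8) t uv] by simp
    have pt: "P (u *\<^sub>R t1 + v *\<^sub>R t2) s \<le> u * P t1 s + v * P t2 s" for s
    proof (cases "0 < s \<and> s < 1")
      case True
      have e: "ht (u *\<^sub>R t1 + v *\<^sub>R t2) s = u * ht t1 s + v * ht t2 s"
        unfolding ht_def using uv(3) by (simp add: algebra_simps) (metis distrib_right mult_1)
      have p1: "0 < ht t1 s" "0 < ht t2 s"
      proof -
        have "0 < h0 s" "0 < h1 s" using A0.hpos A1.hpos True by auto
        then show "0 < ht t1 s" "0 < ht t2 s" unfolding ht_def using t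
          by (auto intro!: add_pos_pos mult_pos_pos)
      qed
      have "(u * ht t1 s + v * ht t2 s) powr (m - 1) \<le> u * ht t1 s powr (m - 1) + v * ht t2 s powr (m - 1)"
        using powr_convex[of "m - 1"] m2 p1 uv unfolding convex_on_def by auto
      then show ?thesis unfolding P_def e using True by simp
    next
      case False
      then show ?thesis unfolding P_def by simp
    qed
    have i1: "integrable lborel (P t1)" "integrable lborel (P t2)" "integrable lborel (P (u *\<^sub>R t1 + v *\<^sub>R t2))"
      using tfacts t tin by auto
    have "Q (u *\<^sub>R t1 + v *\<^sub>R t2) \<le> (\<integral> s. u * P t1 s + v * P t2 s \<partial>lborel)"
      unfolding Q_def by (intro integral_mono i1 Bochner_Integration.integrable_add integrable_mult_right pt)
    also have "\<dots> = u * Q t1 + v * Q t2" unfolding Q_def using i1 by simp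
    finally show "Q (u *\<^sub>R t1 + v *\<^sub>R t2) \<le> u * Q t1 + v * Q t2" .
  qed
  have "m / (m - 1) \<ge> 0" using m2 by simp
  then have QC: "convex_on {0<..<1} (\<lambda>t. m / (m - 1) * Q t)" using Qconv by (rule convex_on_cmul)
  show ?thesis
    unfolding convex_on_def
  proof (intro conjI ballI allI impI)
    show "convex {0<..<1::real}" by simp
    fix t1 t2 u v :: real
    assume t: "t1 \<in> {0<..<1}" "t2 \<in> {0<..<1}" and uv: "0 \<le> u" "0 \<le> v" "u + v = 1"
    have tin: "u *\<^sub>R t1 + v *\<^sub>R t2 \<in> {0<..<1}"
      using convexD[OF convex_real_interval(8) t uv] by simp
    from QC t uv have "m / (m - 1) * Q (u *\<^sub>R t1 + v *\<^sub>R t2) \<le> u * (m / (m - 1) * Q t1) + v * (m / (m - 1) * Q t2)"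
      unfolding convex_on_def by blast
    then show "S_functional m (interp_curve h0 h1 (u *\<^sub>R t1 + v *\<^sub>R t2) :: 'a \<Rightarrow> real)
        \<le> u * S_functional m (interp_curve h0 h1 t1 :: 'a \<Rightarrow> real) + v * S_functional m (interp_curve h0 h1 t2 :: 'a \<Rightarrow> real)"
      using tfacts t tin by simp
  qed
qed

end
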